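(* In the algebra $\mathbb C\langle\langle\mathbb C_n\rangle\rangle$ of noncommutative formal power series over the alphabet $\mathbb C_n$, $$\sum_{S\vDash n}\underline{M_S}=\sum_{E\subseteq\{1,\dots,n\}}A_{n-\#E}(0,1,1,\dots)\,\underline{\mathbb T_E},$$ where the left sum runs over all set partitions $S$ of $\{1,\dots,n\}$.
   Context: $\mathbb C_n=\{c_E\mid E\subseteq\{1,\dots,n\}\}$. For a family $S$ of pairwise disjoint nonempty subsets of $\{1,\dots,n\}$ (written $S\subset_{\vDash}E$ if all its members lie in $E$), $M_S=(\{c_\emptyset\}\cup\{c_s\mid s\in S\})^*$. For $E\subseteq\{1,\dots,n\}$, $\mathbb T_E=\bigcup_{S\subset_{\vDash}E}M_S$ (words encoding, column by column, saturated tableaux whose marked rows all lie in $E$). For a language $L$, $\underline{L}=\sum_{w\in L}w$ is its characteristic series. $A_k(0,1,1,\dots)$ is the complete Bell polynomial evaluated at $a_1=0$, $a_i=1$ ($i\ge2$), i.e. the number of set partitions of a $k$-element set with no singleton block ($A_0=1$); its exponential generating function is $\exp(e^t-1-t)$. *)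

theory Defs
  imports Complex_Main "HOL-Library.Disjoint_Sets"
begin

text \<open>Letters of the alphabet C_n: the letter c_E is represented by the set E itself
  (E a subset of {1..n}).  A noncommutative formal power
  series over C_n with complex coefficients is a function from words to complex numbers;
  addition and scalar multiplication are pointwise.\<close>

type_synonym letter = "nat set"
type_synonym ncseries = "letter list \<Rightarrow> complex"

definition char_series :: "letter list set \<Rightarrow> ncseries" where
  "char_series L = (\<lambda>w. if w \<in> L then 1 else 0)"

text \<open>M_S = ({c_empty} union {c_s | s in S})^*.\<close>
definition M_lang :: "nat set set \<Rightarrow> letter list set" where
  "M_lang S = lists ({{}} \<union> S)"

definition disj_family_in :: "nat set set \<Rightarrow> nat set \<Rightarrow> bool" where
  "disj_family_in S E \<longleftrightarrow> disjoint S \<and> {} \<notin> S \<and> (\<forall>s\<in>S. s \<subseteq> E)"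

definition T_lang :: "nat set \<Rightarrow> letter list set" where
  "T_lang E = (\<Union>S\<in>{S. disj_family_in S E}. M_lang S)"

text \<open>Complete Bell polynomial A_m(a_1,a_2,...), where a i stands for a_i (i \<ge> 1):
  A_0 = 1, A_(m+1) = sum_(k=0..m) binom(m,k) a_(k+1) A_(m-k).\<close>
fun complete_bell :: "(nat \<Rightarrow> complex) \<Rightarrow> nat \<Rightarrow> complex" where
  "complete_bell a 0 = 1"
| "complete_bell a (Suc m) =
     (\<Sum>k\<le>m. of_nat (m choose k) * a (Suc k) * complete_bell a (m - k))"

definition zero_one_seq :: "nat \<Rightarrow> complex" where
  "zero_one_seq i = (if i \<le> 1 then 0 else 1)"

end

theory Submission imports Defs begin

lemma sum_Pow_card:
  assumes "finite Y"
  shows "(\<Sum>K\<in>Pow Y. (h (card K)::complex)) = (\<Sum>k\<le>card Y. of_nat (card Y choose k) * h k)"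
proof -
  have "(\<Sum>K\<in>Pow Y. h (card K)) = (\<Sum>k\<le>card Y. \<Sum>K\<in>{K. K \<in> Pow Y \<and> card K = k}. h (card K))"
    by (rule sum.group[symmetric]) (use assms card_mono in auto)
  also have "\<dots> = (\<Sum>k\<le>card Y. of_nat (card Y choose k) * h k)"
  proof (rule sum.cong[OF refl])
    fix k
    have "(\<Sum>K\<in>{K. K \<in> Pow Y \<and> card K = k}. h (card K)) = (\<Sum>K\<in>{K. K \<subseteq> Y \<and> card K = k}. h k)"
      by (rule sum.cong) auto
    also have "\<dots> = of_nat (card Y choose k) * h k"
      using n_subsets[OF assms, of k] by simp
    finally show "(\<Sum>K\<in>{K. K \<in> Pow Y \<and> card K = k}. h (card K)) = of_nat (card Y choose k) * h k" .
  qed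
  finally show ?thesis .
qed

abbreviation A where "A \<equiv> complete_bell zero_one_seq"

lemma A_Suc_sets:
  assumes "finite Y"
  shows "A (Suc (card Y)) = (\<Sum>K\<in>{K. K \<subseteq> Y \<and> K \<noteq> {}}. A (card (Y - K)))"
proof -
  have "(\<Sum>K\<in>{K. K \<subseteq> Y \<and> K \<noteq> {}}. A (card (Y - K)))
      = (\<Sum>K\<in>Pow Y. (\<lambda>k. if k = 0 then 0 else A (card Y - k)) (card K))"
    apply (rule sum.mono_neutral_cong_left)
    using assms by (auto simp: card_Diff_subset finite_subset card_eq_0_iff)
  also have "\<dots> = (\<Sum>k\<le>card Y. of_nat (card Y choose k) * (if k = 0 then 0 else A (card Y - k)))"
    by (rule sum_Pow_card[OF assms])
  also have "\<dots> = A (Suc (card Y))"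
    by (auto intro!: sum.cong simp: zero_one_seq_def)
  finally show ?thesis ..
qed

definition Zs :: "'a set \<Rightarrow> 'a set set set" where
  "Zs X = {P. partition_on X P \<and> (\<forall>b\<in>P. 2 \<le> card b)}"

lemma finite_Zs: "finite X \<Longrightarrow> finite (Zs X)"
  by (rule finite_subset[OF _ finitely_many_partition_on]) (auto simp: Zs_def)

lemma Zs_insert:
  assumes fin: "finite Y" and x: "x \<notin> Y"
  shows "card (Zs (insert x Y)) = (\<Sum>K\<in>{K. K \<subseteq> Y \<and> K \<noteq> {}}. card (Zs (Y - K)))"
proof -
  define S where "S = Sigma {K. K \<subseteq> Y \<and> K \<noteq> {}} (\<lambda>K. Zs (Y - K))"
  define g where "g = (\<lambda>(K, Q). insert (insert x K) (Q::'a set set))"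
  have finS: "finite {K. K \<subseteq> Y \<and> K \<noteq> {}}" using fin by simp
  have cS: "card S = (\<Sum>K\<in>{K. K \<subseteq> Y \<and> K \<noteq> {}}. card (Zs (Y - K)))"
    unfolding S_def by (rule card_SigmaI[OF finS]) (use fin finite_Zs in auto)
  have inj: "inj_on g S"
  proof (rule inj_onI)
    fix p q assume p: "p \<in> S" and q: "q \<in> S" and e: "g p = g q"
    obtain K Q where pKQ: "p = (K, Q)" by (cases p)
    obtain K' Q' where qKQ: "q = (K', Q')" by (cases q)
    have K: "K \<subseteq> Y" "partition_on (Y - K) Q" using p pKQ by (auto simp: S_def Zs_def)
    have K': "K' \<subseteq> Y" "partition_on (Y - K') Q'" using q qKQ by (auto simp: S_def Zs_def)
    have e': "insert (insert x K) Q = insert (insert x K') Q'" using e pKQ qKQ by (simp add: g_def)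
    have nQ: "insert x K \<notin> Q" using K x partition_onD1[OF K(2)] by auto
    have nQ': "insert x K' \<notin> Q'" using K' x partition_onD1[OF K'(2)] by auto
    have "insert x K \<in> insert (insert x K') Q'" using e' by blast
    with nQ' K' x partition_onD1[OF K'(2)] have "insert x K = insert x K'" by auto
    hence KK: "K = K'" using x K(1) K'(1) by (metis insert_ident subsetD)
    have "Q = insert (insert x K) Q - {insert x K}" using nQ by blast
    also have "\<dots> = Q'" using e' nQ' KK by blast
    finally show "p = q" using pKQ qKQ KK by simp
  qed
  have img: "g ` S = Zs (insert x Y)"
  proof
    show "g ` S \<subseteq> Zs (insert x Y)"
    proof
      fix P assume "P \<in> g ` S"
      then obtain K Q where KQ: "K \<subseteq> Y" "K \<noteq> {}" "partition_on (Y - K) Q" "\<forall>b\<in>Q. 2 \<le> card b"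
        and P: "P = insert (insert x K) Q" by (auto simp: S_def Zs_def g_def)
      have dj: "disjnt (insert x K) (\<Union>Q)" using partition_onD1[OF KQ(3)] x KQ(1)
        by (auto simp: disjnt_def)
      have "insert x Y - insert x K = Y - K" using x by blast
      hence "partition_on (insert x Y) P" unfolding P partition_on_insert[OF dj]
        using KQ by auto
      moreover have "2 \<le> card (insert x K)"
      proof -
        have "finite K" using KQ(1) fin finite_subset by blast
        moreover have "x \<notin> K" using KQ(1) x by blast
        ultimately have "card (insert x K) = Suc (card K)" by simp
        moreover have "card K \<ge> 1" using KQ \<open>finite K\<close> by (simp add: Suc_leI card_gt_0_iff)
        ultimately show ?thesis by simp
      qed
      ultimately show "P \<in> Zs (insert x Y)" using KQ(4) P by (auto simp: Zs_def)
    qed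
  next
    show "Zs (insert x Y) \<subseteq> g ` S"
    proof
      fix P assume P: "P \<in> Zs (insert x Y)"
      hence pP: "partition_on (insert x Y) P" and c2: "\<forall>b\<in>P. 2 \<le> card b" by (auto simp: Zs_def)
      obtain b where b: "b \<in> P" "x \<in> b" using partition_onD1[OF pP] by blast
      define Q where "Q = P - {b}"
      have Pb: "P = insert b Q" using b Q_def by blast
      have dj: "disjnt b (\<Union>Q)" using partition_onD2[OF pP] b
        unfolding Q_def disjnt_def pairwise_def by auto
      have pQ: "partition_on (insert x Y - b) Q" "b \<subseteq> insert x Y"
        using pP unfolding Pb partition_on_insert[OF dj] by auto
      define K where "K = b - {x}"
      have bK: "b = insert x K" using b K_def by blast
      have KY: "K \<subseteq> Y" using pQ(2) K_def by blast
      have "K \<noteq> {}"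
      proof
        assume "K = {}" hence "b = {x}" using bK by simp
        thus False using c2 b by auto
      qed
      moreover have "insert x Y - b = Y - K" using bK x by blast
      moreover have "\<forall>c\<in>Q. 2 \<le> card c" using c2 Q_def by blast
      ultimately have "(K, Q) \<in> S" using pQ KY by (auto simp: S_def Zs_def)
      moreover have "g (K, Q) = P" using Pb bK by (simp add: g_def)
      ultimately show "P \<in> g ` S" by force
    qed
  qed
  show ?thesis using card_image[OF inj] img cS by simp
qed

lemma card_Zs: "finite X \<Longrightarrow> card (Zs X) = A (card X)"
proof (induction "card X" arbitrary: X rule: less_induct)
  case less
  show ?case
  proof (cases "X = {}")
    case True
    have "Zs X = {{}}" using True by (auto simp: Zs_def partition_on_empty)
    thus ?thesis using True by simp
  next
    case False
    then obtain x Y where X: "X = insert x Y" "x \<notin> Y" by (metis insert_Diff all_not_in_conv Diff_iff singletonI)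
    have fY: "finite Y" using less.prems X by simp
    have "of_nat (card (Zs X)) = (\<Sum>K\<in>{K. K \<subseteq> Y \<and> K \<noteq> {}}. of_nat (card (Zs (Y - K))) :: complex)"
      using Zs_insert[OF fY X(2)] X by simp
    also have "\<dots> = (\<Sum>K\<in>{K. K \<subseteq> Y \<and> K \<noteq> {}}. A (card (Y - K)))"
    proof (rule sum.cong[OF refl])
      fix K assume "K \<in> {K. K \<subseteq> Y \<and> K \<noteq> {}}"
      hence "card (Y - K) < card X" using X fY
        by (metis card_Diff_subset card_insert_disjoint finite_subset diff_le_self le_imp_less_Suc mem_Collect_eq)
      thus "of_nat (card (Zs (Y - K))) = A (card (Y - K))" using less.hyps fY by simp
    qed
    also have "\<dots> = A (card X)" using A_Suc_sets[OF fY] X fY by simp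
    finally show ?thesis .
  qed
qed

lemma card_partitions:
  assumes fin: "finite C"
  shows "card {P. partition_on C P} = (\<Sum>D\<in>Pow C. card (Zs D))"
proof -
  define S where "S = Sigma (Pow C) Zs"
  define g where "g = (\<lambda>(D, Q). Q \<union> (\<lambda>x. {x}) ` (C - D))"
  define h where "h = (\<lambda>P. (C - {x. {x} \<in> P}, {b\<in>P. 2 \<le> card b}))"
  have cS: "card S = (\<Sum>D\<in>Pow C. card (Zs D))"
    unfolding S_def by (rule card_SigmaI) (use fin finite_Zs finite_subset in auto)
  have hg: "h (g s) = s" if s: "s \<in> S" for s
  proof -
    obtain D Q where sDQ: "s = (D, Q)" by (cases s)
    have D: "D \<subseteq> C" and pQ: "partition_on D Q" and cQ: "\<forall>b\<in>Q. 2 \<le> card b"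
      using s sDQ by (auto simp: S_def Zs_def)
    have sing: "{x} \<in> Q \<Longrightarrow> False" for x using cQ by force
    have UQ: "\<Union>Q = D" using partition_onD1[OF pQ] by simp
    have 1: "{x. {x} \<in> g (D, Q)} = C - D" using sing by (auto simp: g_def)
    have 2: "{b \<in> g (D, Q). 2 \<le> card b} = Q" using cQ by (auto simp: g_def)
    show ?thesis using 1 2 D sDQ by (auto simp: h_def)
  qed
  have inj: "inj_on g S" by (rule inj_on_inverseI[of _ h]) (use hg in auto)
  have img: "g ` S = {P. partition_on C P}"
  proof
    show "g ` S \<subseteq> {P. partition_on C P}"
    proof
      fix P assume "P \<in> g ` S"
      then obtain D Q where D: "D \<subseteq> C" and pQ: "partition_on D Q" and P: "P = Q \<union> (\<lambda>x. {x}) ` (C - D)"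
        by (auto simp: S_def Zs_def g_def)
      have UQ: "\<Union>Q = D" using partition_onD1[OF pQ] by simp
      have "disjoint P" unfolding P
        by (rule disjoint_union[OF partition_onD2[OF pQ]]) (use UQ in \<open>auto simp: disjoint_def\<close>)
      moreover have "\<Union>P = C" using UQ D P by auto
      moreover have "{} \<notin> P" using partition_onD3[OF pQ] P by auto
      ultimately show "P \<in> {P. partition_on C P}" by (simp add: partition_on_def)
    qed
  next
    show "{P. partition_on C P} \<subseteq> g ` S"
    proof
      fix P assume "P \<in> {P. partition_on C P}"
      hence pP: "partition_on C P" by simp
      have UP: "\<Union>P = C" and dP: "disjoint P" and eP: "{} \<notin> P"
        using pP by (auto simp: partition_on_def)
      define D where "D = C - {x. {x} \<in> P}"
      define Q where "Q = {b\<in>P. 2 \<le> card b}"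
      have finb: "b \<in> P \<Longrightarrow> finite b" for b using UP fin by (meson Union_upper finite_subset)
      have small: "b \<in> P \<Longrightarrow> \<not> 2 \<le> card b \<Longrightarrow> \<exists>y. b = {y}" for b
      proof -
        assume b: "b \<in> P" "\<not> 2 \<le> card b"
        have "card b \<noteq> 0" using finb[OF b(1)] eP b(1) by auto
        hence "card b = 1" using b(2) by linarith
        thus ?thesis by (simp add: card_1_singleton_iff)
      qed
      have clash: "b \<in> P \<Longrightarrow> x \<in> b \<Longrightarrow> {x} \<in> P \<Longrightarrow> b = {x}" for b x
        using disjointD[OF dP, of b "{x}"] by blast
      have UQ: "\<Union>Q = D"
      proof
        show "\<Union>Q \<subseteq> D"
        proof
          fix x assume "x \<in> \<Union>Q"
          then obtain b where b: "b \<in> P" "2 \<le> card b" "x \<in> b" by (auto simp: Q_def)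
          have "{x} \<notin> P" using clash[OF b(1) b(3)] b(2) by auto
          thus "x \<in> D" using b UP D_def by auto
        qed
      next
        show "D \<subseteq> \<Union>Q"
        proof
          fix x assume x: "x \<in> D"
          then obtain b where b: "b \<in> P" "x \<in> b" using UP D_def by auto
          have "2 \<le> card b"
          proof (rule ccontr)
            assume "\<not> 2 \<le> card b"
            then obtain y where "b = {y}" using small b(1) by blast
            thus False using b x D_def by auto
          qed
          thus "x \<in> \<Union>Q" using b Q_def by auto
        qed
      qed
      have pQ: "partition_on D Q"
        using UQ pairwise_subset[OF dP] eP unfolding partition_on_def Q_def by auto
      have "D \<subseteq> C" using D_def by auto
      moreover have "Q \<in> Zs D" using pQ Q_def by (auto simp: Zs_def)
      moreover have "g (D, Q) = P"
      proof -
        have CD: "C - D = {x. {x} \<in> P}" using UP D_def by auto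
        have "(\<lambda>x. {x}) ` (C - D) = {b\<in>P. \<not> 2 \<le> card b}"
        proof
          show "(\<lambda>x. {x}) ` (C - D) \<subseteq> {b\<in>P. \<not> 2 \<le> card b}" unfolding CD by auto
          show "{b\<in>P. \<not> 2 \<le> card b} \<subseteq> (\<lambda>x. {x}) ` (C - D)"
          proof
            fix b assume "b \<in> {b\<in>P. \<not> 2 \<le> card b}"
            then obtain y where "b = {y}" "b \<in> P" using small by blast
            thus "b \<in> (\<lambda>x. {x}) ` (C - D)" unfolding CD by auto
          qed
        qed
        thus ?thesis by (auto simp: g_def Q_def)
      qed
      ultimately show "P \<in> g ` S" unfolding S_def by (intro image_eqI[of _ _ "(D,Q)"]) auto
    qed
  qed
  show ?thesis using card_image[OF inj] img cS by simp
qed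

lemma M_mem: "w \<in> M_lang S \<longleftrightarrow> set w - {{}} \<subseteq> S"
  by (auto simp: M_lang_def)

lemma T_mem: "w \<in> T_lang E \<longleftrightarrow> disjoint (set w - {{}}) \<and> \<Union>(set w - {{}}) \<subseteq> E"
proof
  assume "w \<in> T_lang E"
  then obtain S where S: "disj_family_in S E" "set w - {{}} \<subseteq> S"
    by (auto simp: T_lang_def M_mem)
  thus "disjoint (set w - {{}}) \<and> \<Union>(set w - {{}}) \<subseteq> E"
    using pairwise_subset by (fastforce simp: disj_family_in_def)
next
  assume a: "disjoint (set w - {{}}) \<and> \<Union>(set w - {{}}) \<subseteq> E"
  hence "disj_family_in (set w - {{}}) E" by (auto simp: disj_family_in_def)
  thus "w \<in> T_lang E" unfolding T_lang_def by (auto simp: M_mem)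
qed

lemma count_L:
  assumes dL: "disjoint L" and eL: "{} \<notin> L" and UL: "\<Union>L \<subseteq> N"
  shows "card {S. partition_on N S \<and> L \<subseteq> S} = card {P. partition_on (N - \<Union>L) P}"
proof -
  define g where "g = (\<lambda>P. P \<union> (L::'a set set))"
  have PL: "partition_on (N - \<Union>L) P \<Longrightarrow> P \<inter> L = {}" for P
  proof -
    assume p: "partition_on (N - \<Union>L) P"
    show "P \<inter> L = {}"
    proof (rule ccontr)
      assume "P \<inter> L \<noteq> {}"
      then obtain b where b: "b \<in> P" "b \<in> L" by blast
      have "b \<noteq> {}" using b eL by auto
      moreover have "b \<subseteq> N - \<Union>L" using b partition_onD1[OF p] by auto
      ultimately show False using b by auto
    qed
  qed
  have inj: "inj_on g {P. partition_on (N - \<Union>L) P}"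
  proof (rule inj_onI)
    fix P P' assume "P \<in> {P. partition_on (N - \<Union>L) P}" "P' \<in> {P. partition_on (N - \<Union>L) P}" "g P = g P'"
    with PL show "P = P'" unfolding g_def by blast
  qed
  have img: "g ` {P. partition_on (N - \<Union>L) P} = {S. partition_on N S \<and> L \<subseteq> S}"
  proof
    show "g ` {P. partition_on (N - \<Union>L) P} \<subseteq> {S. partition_on N S \<and> L \<subseteq> S}"
    proof
      fix S assume "S \<in> g ` {P. partition_on (N - \<Union>L) P}"
      then obtain P where p: "partition_on (N - \<Union>L) P" and S: "S = P \<union> L" by (auto simp: g_def)
      have UP: "\<Union>P = N - \<Union>L" using partition_onD1[OF p] by simp
      have "disjoint S" unfolding S
        by (rule disjoint_union[OF partition_onD2[OF p] dL]) (use UP in auto)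
      moreover have "\<Union>S = N" using UP UL S by auto
      moreover have "{} \<notin> S" using partition_onD3[OF p] eL S by auto
      ultimately show "S \<in> {S. partition_on N S \<and> L \<subseteq> S}" using S by (auto simp: partition_on_def)
    qed
  next
    show "{S. partition_on N S \<and> L \<subseteq> S} \<subseteq> g ` {P. partition_on (N - \<Union>L) P}"
    proof
      fix S assume "S \<in> {S. partition_on N S \<and> L \<subseteq> S}"
      hence pS: "partition_on N S" and LS: "L \<subseteq> S" by auto
      have dS: "disjoint S" and US: "\<Union>S = N" and eS: "{} \<notin> S" using pS by (auto simp: partition_on_def)
      have "\<Union>(S - L) = N - \<Union>L"
      proof
        show "\<Union>(S - L) \<subseteq> N - \<Union>L"
        proof
          fix x assume "x \<in> \<Union>(S - L)"
          then obtain b where b: "b \<in> S" "b \<notin> L" "x \<in> b" by auto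
          have "x \<notin> \<Union>L"
          proof
            assume "x \<in> \<Union>L"
            then obtain l where l: "l \<in> L" "x \<in> l" by auto
            have "b \<noteq> l" using b l by auto
            hence "b \<inter> l = {}" using disjointD[OF dS b(1)] l LS by auto
            thus False using b l by auto
          qed
          thus "x \<in> N - \<Union>L" using b US by auto
        qed
        show "N - \<Union>L \<subseteq> \<Union>(S - L)" using US by auto
      qed
      hence "partition_on (N - \<Union>L) (S - L)"
        using pairwise_subset[OF dS] eS by (auto simp: partition_on_def)
      moreover have "g (S - L) = S" using LS by (auto simp: g_def)
      ultimately show "S \<in> g ` {P. partition_on (N - \<Union>L) P}" by (intro image_eqI[of _ _ "S - L"]) auto
    qed
  qed
  show ?thesis using card_image[OF inj] img by simp
qed

theorem proposition1:
  fixes n :: nat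
  shows "(\<lambda>w. \<Sum>S\<in>{S. partition_on {1..n} S}. char_series (M_lang S) w)
       = (\<lambda>w. \<Sum>E\<in>Pow {1..n}.
              complete_bell zero_one_seq (n - card E) * char_series (T_lang E) w)"
proof
  fix w :: "letter list"
  define N where "N = {1..n}"
  define L where "L = set w - {{}}"
  have fN: "finite N" and cN: "card N = n" by (auto simp: N_def)
  have eL: "{} \<notin> L" by (auto simp: L_def)
  have finP: "finite {S. partition_on N S}" using finitely_many_partition_on[OF fN] .
  have lhs: "(\<Sum>S\<in>{S. partition_on N S}. char_series (M_lang S) w)
      = of_nat (card {S. partition_on N S \<and> L \<subseteq> S})"
  proof -
    have "(\<Sum>S\<in>{S. partition_on N S}. char_series (M_lang S) w)
        = (\<Sum>S\<in>{S. partition_on N S}. if L \<subseteq> S then 1 else 0)"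
      by (simp add: char_series_def M_mem L_def)
    also have "\<dots> = (\<Sum>S\<in>{S \<in> {S. partition_on N S}. L \<subseteq> S}. 1)"
      by (rule sum.inter_filter[symmetric, OF finP])
    also have "\<dots> = of_nat (card {S. partition_on N S \<and> L \<subseteq> S})" by simp
    finally show ?thesis .
  qed
  have rhs: "(\<Sum>E\<in>Pow N. A (n - card E) * char_series (T_lang E) w)
      = (\<Sum>E\<in>{E \<in> Pow N. disjoint L \<and> \<Union>L \<subseteq> E}. A (n - card E))"
  proof -
    have "(\<Sum>E\<in>Pow N. A (n - card E) * char_series (T_lang E) w)
        = (\<Sum>E\<in>Pow N. if disjoint L \<and> \<Union>L \<subseteq> E then A (n - card E) else 0)"
      by (rule sum.cong) (auto simp: char_series_def T_mem L_def)
    also have "\<dots> = (\<Sum>E\<in>{E \<in> Pow N. disjoint L \<and> \<Union>L \<subseteq> E}. A (n - card E))"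
      by (rule sum.inter_filter[symmetric]) (use fN in simp)
    finally show ?thesis .
  qed
  show "(\<Sum>S\<in>{S. partition_on {1..n} S}. char_series (M_lang S) w)
       = (\<Sum>E\<in>Pow {1..n}. A (n - card E) * char_series (T_lang E) w)"
  proof (cases "disjoint L \<and> \<Union>L \<subseteq> N")
    case True
    hence dL: "disjoint L" and UL: "\<Union>L \<subseteq> N" by auto
    define C where "C = N - \<Union>L"
    have fC: "finite C" using fN by (simp add: C_def)
    have "(\<Sum>E\<in>{E \<in> Pow N. disjoint L \<and> \<Union>L \<subseteq> E}. A (n - card E)) = (\<Sum>D\<in>Pow C. A (card D))"
    proof -
      have cd: "E \<subseteq> N \<Longrightarrow> card (N - E) = n - card E" for E
        using fN cN by (simp add: card_Diff_subset finite_subset)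
      show ?thesis
        by (rule sum.reindex_bij_witness[of _ "\<lambda>D. N - D" "\<lambda>E. N - E"])
           (use dL UL cd in \<open>auto simp: C_def\<close>)
    qed
    also have "\<dots> = (\<Sum>D\<in>Pow C. of_nat (card (Zs D)))"
    proof (rule sum.cong[OF refl])
      fix D assume "D \<in> Pow C"
      hence "finite D" using fC finite_subset by blast
      thus "A (card D) = of_nat (card (Zs D))" by (rule card_Zs[symmetric])
    qed
    also have "\<dots> = of_nat (card {P. partition_on C P})"
      using card_partitions[OF fC] by simp
    also have "\<dots> = of_nat (card {S. partition_on N S \<and> L \<subseteq> S})"
      using count_L[OF dL eL UL] by (simp add: C_def)
    finally show ?thesis using lhs rhs by (simp add: N_def)
  next
    case False
    have e1: "{S. partition_on N S \<and> L \<subseteq> S} = {}"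
    proof (rule ccontr)
      assume "{S. partition_on N S \<and> L \<subseteq> S} \<noteq> {}"
      then obtain S where "partition_on N S" "L \<subseteq> S" by auto
      thus False using False pairwise_subset by (fastforce simp: partition_on_def)
    qed
    have e2: "{E \<in> Pow N. disjoint L \<and> \<Union>L \<subseteq> E} = {}" using False by auto
    show ?thesis unfolding N_def[symmetric] lhs rhs e1 e2 by simp
  qed
qed
end
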